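(* Let $\alpha\in\mathbb N^n$ and let $\mathcal A=\{u_1,\ldots,u_m\}$ be a set of monomials of degree $d$ in $S=K[x_1,\ldots,x_n]$. Then $\mathcal A$ is sortable if and only if $\mathcal A^\alpha$ is sortable.
   Context: $\mathbb N$ denotes the positive integers. For $\alpha=(k_1,\ldots,k_n)$, $S^\alpha=K[x_{ij}:1\le i\le n,1\le j\le k_i]$, $\pi:S^\alpha\to S$, $x_{ij}\mapsto x_i$, and $\mathcal A^\alpha$ is the set of monomials $w\in S^\alpha$ with $\pi(w)\in\mathcal A$. Sorting: for a totally ordered set of variables and monomials $u,v$ of degree $d$, write $uv=z_1z_2\cdots z_{2d}$ with variables $z_1\le z_2\le\cdots\le z_{2d}$, and set $\mathrm{sort}(u,v)=(u',v')$ with $u'=\prod_{j=1}^d z_{2j-1}$, $v'=\prod_{j=1}^d z_{2j}$. A set $\mathcal B$ of degree-$d$ monomials is sortable if $\mathrm{sort}(u,v)\in\mathcal B\times\mathcal B$ for all $u,v\in\mathcal B$. In $S$ the variables are ordered $x_1<\cdots<x_n$ and in $S^\alpha$ they are ordered $x_{11}<\cdots<x_{1k_1}<\cdots<x_{n1}<\cdots<x_{nk_n}$. *)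

theory Defs
  imports Main "HOL-Library.Multiset" "HOL-Library.Product_Lexorder"
begin

text \<open>A monomial over a totally ordered set of variables is represented by the
multiset of its variables (with multiplicity); its degree is the size.
The product of monomials is multiset sum.\<close>

definition sort_mon :: "'v::linorder multiset \<Rightarrow> 'v multiset \<Rightarrow> 'v multiset \<times> 'v multiset" where
  "sort_mon u v =
     (let zs = sorted_list_of_multiset (u + v)
      in (mset (nths zs {j. even j}), mset (nths zs {j. odd j})))"

definition sortable :: "'v::linorder multiset set \<Rightarrow> bool" where
  "sortable B \<longleftrightarrow> (\<forall>u\<in>B. \<forall>v\<in>B. sort_mon u v \<in> B \<times> B)"

text \<open>Variables of S are x_1..x_n, encoded by i; variables of S^alpha are x_ij,
encoded by the pair (i,j), ordered lexicographically.\<close>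

definition mon_S :: "nat \<Rightarrow> nat multiset \<Rightarrow> bool" where
  "mon_S n u \<longleftrightarrow> set_mset u \<subseteq> {1..n}"

definition mon_Salpha :: "nat \<Rightarrow> (nat \<Rightarrow> nat) \<Rightarrow> (nat \<times> nat) multiset \<Rightarrow> bool" where
  "mon_Salpha n k w \<longleftrightarrow> set_mset w \<subseteq> {(i, j). 1 \<le> i \<and> i \<le> n \<and> 1 \<le> j \<and> j \<le> k i}"

definition proj :: "(nat \<times> nat) multiset \<Rightarrow> nat multiset" where
  "proj w = image_mset fst w"

definition polarization_set :: "nat \<Rightarrow> (nat \<Rightarrow> nat) \<Rightarrow> nat multiset set \<Rightarrow> (nat \<times> nat) multiset set" where
  "polarization_set n k A = {w. mon_Salpha n k w \<and> proj w \<in> A}"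

end

theory Submission
  imports Defs
begin

lemma sorted_map_fst:
  fixes L :: "(nat \<times> nat) list"
  assumes "sorted L" shows "sorted (map fst L)"
  using assms unfolding sorted_map
  by (rule sorted_wrt_mono_rel[rotated]) (auto simp: less_eq_prod_def)

lemma map_fst_sorted_list:
  fixes W :: "(nat \<times> nat) multiset"
  shows "map fst (sorted_list_of_multiset W) = sorted_list_of_multiset (image_mset fst W)"
proof -
  let ?L = "sorted_list_of_multiset W"
  have "image_mset fst W = mset (map fst ?L)" by simp
  hence "sorted_list_of_multiset (image_mset fst W) = sort (map fst ?L)"
    by (metis sorted_list_of_multiset_mset)
  also have "\<dots> = map fst ?L"
    using sorted_map_fst[of ?L] by (simp add: sorted_sort_id)
  finally show ?thesis by simp
qed

lemma proj_sort:
  "sort_mon (proj w1) (proj w2) = (proj (fst (sort_mon w1 w2)), proj (snd (sort_mon w1 w2)))"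
proof -
  have "proj w1 + proj w2 = image_mset fst (w1 + w2)" by (simp add: proj_def)
  hence e: "sorted_list_of_multiset (proj w1 + proj w2) = map fst (sorted_list_of_multiset (w1 + w2))"
    by (simp add: map_fst_sorted_list)
  show ?thesis
    unfolding sort_mon_def Let_def e
    by (simp add: nths_map proj_def)
qed

lemma sort_sub:
  "set_mset (fst (sort_mon u v)) \<subseteq> set_mset u \<union> set_mset v"
  "set_mset (snd (sort_mon u v)) \<subseteq> set_mset u \<union> set_mset v"
  unfolding sort_mon_def Let_def
  using set_nths_subset by (fastforce dest: in_set_nthsD)+

theorem theorem2p14:
  fixes n d :: nat and k :: "nat \<Rightarrow> nat" and A :: "nat multiset set"
  assumes "\<forall>i\<in>{1..n}. k i \<ge> 1"
    and "finite A"
    and "\<forall>u\<in>A. mon_S n u \<and> size u = d"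
  shows "sortable A \<longleftrightarrow> sortable (polarization_set n k A)"
proof
  assume sA: "sortable A"
  show "sortable (polarization_set n k A)"
    unfolding sortable_def
  proof (intro ballI)
    fix w1 w2 assume w1: "w1 \<in> polarization_set n k A" and w2: "w2 \<in> polarization_set n k A"
    have P: "sort_mon (proj w1) (proj w2) \<in> A \<times> A"
      using sA w1 w2 unfolding sortable_def polarization_set_def by auto
    have "mon_Salpha n k (fst (sort_mon w1 w2))" "mon_Salpha n k (snd (sort_mon w1 w2))"
      using w1 w2 sort_sub[of w1 w2] unfolding polarization_set_def mon_Salpha_def by blast+
    with P show "sort_mon w1 w2 \<in> polarization_set n k A \<times> polarization_set n k A"
      unfolding proj_sort polarization_set_def
      by (cases "sort_mon w1 w2") auto
  qed
next
  assume sP: "sortable (polarization_set n k A)"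
  define lift where "lift = (\<lambda>u::nat multiset. image_mset (\<lambda>i. (i, 1::nat)) u)"
  have lift: "lift u \<in> polarization_set n k A" if "u \<in> A" for u
  proof -
    have "mon_S n u" using assms(3) that by auto
    hence "mon_Salpha n k (lift u)" using assms(1)
      unfolding mon_S_def mon_Salpha_def lift_def by auto
    moreover have "proj (lift u) = u" unfolding proj_def lift_def by (simp add: multiset.map_comp comp_def)
    ultimately show ?thesis using that unfolding polarization_set_def by auto
  qed
  have pl: "proj (lift u) = u" for u unfolding proj_def lift_def by (simp add: multiset.map_comp comp_def)
  show "sortable A"
    unfolding sortable_def
  proof (intro ballI)
    fix u v assume u: "u \<in> A" and v: "v \<in> A"
    have "sort_mon (lift u) (lift v) \<in> polarization_set n k A \<times> polarization_set n k A"
      using sP lift[OF u] lift[OF v] unfolding sortable_def by auto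
    hence "proj (fst (sort_mon (lift u) (lift v))) \<in> A" "proj (snd (sort_mon (lift u) (lift v))) \<in> A"
      unfolding polarization_set_def by auto
    thus "sort_mon u v \<in> A \<times> A"
      using proj_sort[of "lift u" "lift v"] by (simp add: pl)
  qed
qed

end
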